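(* Fix $t\in[0,1/2]$. Let $A,B,S,T\subset[n]$ be pairwise disjoint and let $F,G:\{0,1\}^n\times\{0,1\}^n\to\mathbb R$ be such that $F(\omega,\omega_t)$ is measurable with respect to $\{(\omega(x),\omega_t(x)):x\in A\cup S\cup T\}$, $G(\omega,\omega_t)$ is measurable with respect to $\{(\omega(x),\omega_t(x)):x\in B\cup S\cup T\}$, and $F,G$ are both $S$-increasing and $T$-decreasing. Then $$\mathbb E[F(\omega,\omega_t)G(\omega,\omega_t)]\ge\mathbb E[F(\omega,\omega_t)]\,\mathbb E[G(\omega,\omega_t)].$$
   Context: $\omega$ is uniform on $\{0,1\}^n$ and $\omega_t$ is obtained from $\omega$ by flipping each coordinate independently with probability $t$. $x^i$ (resp. $x_i$) is $x$ with $i$-th coordinate set to $1$ (resp. $0$). For $S\subset[n]$, $F$ is $S$-increasing if for all $x,y\in\{0,1\}^n$ and all $i\in S$: $F(x^i,y)\ge F(x_i,y)$ and $F(x,y^i)\ge F(x,y_i)$; $F$ is $T$-decreasing if for all $x,y$ and $i\in T$: $F(x^i,y)\le F(x_i,y)$ and $F(x,y^i)\le F(x,y_i)$. *)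

theory Defs
  imports "HOL-Analysis.Analysis"
begin

(* Configurations in {0,1}^n, with [n] = {1..n}: boolean functions on nat vanishing outside {1..n}
   (True = 1, False = 0). *)
definition cube :: "nat \<Rightarrow> (nat \<Rightarrow> bool) set" where
  "cube n = {x. \<forall>i. i \<notin> {1..n} \<longrightarrow> \<not> x i}"

(* Joint probability mass of (omega, omega_t): omega uniform, each coordinate flipped
   independently with probability t. *)
definition joint_pmf :: "nat \<Rightarrow> real \<Rightarrow> (nat \<Rightarrow> bool) \<Rightarrow> (nat \<Rightarrow> bool) \<Rightarrow> real" where
  "joint_pmf n t x y = (1/2)^n * (\<Prod>i\<in>{1..n}. if x i = y i then 1 - t else t)"

definition expect :: "nat \<Rightarrow> real \<Rightarrow> ((nat \<Rightarrow> bool) \<Rightarrow> (nat \<Rightarrow> bool) \<Rightarrow> real) \<Rightarrow> real" where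
  "expect n t H = (\<Sum>x\<in>cube n. \<Sum>y\<in>cube n. joint_pmf n t x y * H x y)"

(* H(omega, omega_t) is measurable w.r.t. {(omega(i), omega_t(i)) : i \<in> C}: on the support of
   (omega, omega_t), H depends only on the pairs of coordinates indexed by C. *)
definition depends_on :: "nat \<Rightarrow> real \<Rightarrow> nat set \<Rightarrow> ((nat \<Rightarrow> bool) \<Rightarrow> (nat \<Rightarrow> bool) \<Rightarrow> real) \<Rightarrow> bool" where
  "depends_on n t C H \<longleftrightarrow>
     (\<forall>x\<in>cube n. \<forall>y\<in>cube n. \<forall>x'\<in>cube n. \<forall>y'\<in>cube n.
        joint_pmf n t x y > 0 \<longrightarrow> joint_pmf n t x' y' > 0 \<longrightarrow>
        (\<forall>i\<in>C. x i = x' i \<and> y i = y' i) \<longrightarrow> H x y = H x' y')"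

definition S_increasing :: "nat \<Rightarrow> nat set \<Rightarrow> ((nat \<Rightarrow> bool) \<Rightarrow> (nat \<Rightarrow> bool) \<Rightarrow> real) \<Rightarrow> bool" where
  "S_increasing n S F \<longleftrightarrow>
     (\<forall>x\<in>cube n. \<forall>y\<in>cube n. \<forall>i\<in>S.
        F (x(i := True)) y \<ge> F (x(i := False)) y \<and> F x (y(i := True)) \<ge> F x (y(i := False)))"

definition T_decreasing :: "nat \<Rightarrow> nat set \<Rightarrow> ((nat \<Rightarrow> bool) \<Rightarrow> (nat \<Rightarrow> bool) \<Rightarrow> real) \<Rightarrow> bool" where
  "T_decreasing n T F \<longleftrightarrow>
     (\<forall>x\<in>cube n. \<forall>y\<in>cube n. \<forall>i\<in>T.
        F (x(i := True)) y \<le> F (x(i := False)) y \<and> F x (y(i := True)) \<le> F x (y(i := False)))"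

end

theory Submission
  imports Defs
begin

definition pw :: "real \<Rightarrow> bool \<Rightarrow> bool \<Rightarrow> real" where
  "pw t a b = (if a = b then (1-t)/2 else t/2)"
definition cubeI :: "nat set \<Rightarrow> (nat \<Rightarrow> bool) set" where
  "cubeI I = {x. \<forall>i. i \<notin> I \<longrightarrow> \<not> x i}"
definition EI :: "real \<Rightarrow> nat set \<Rightarrow> ((nat \<Rightarrow> bool) \<Rightarrow> (nat \<Rightarrow> bool) \<Rightarrow> real) \<Rightarrow> real" where
  "EI t I H = (\<Sum>x\<in>cubeI I. \<Sum>y\<in>cubeI I. (\<Prod>i\<in>I. pw t (x i) (y i)) * H x y)"

lemma pw_nonneg: "0 \<le> t \<Longrightarrow> t \<le> 1 \<Longrightarrow> 0 \<le> pw t a b"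
  by (simp add: pw_def)

lemma finite_cubeI: assumes "finite I" shows "finite (cubeI I)"
proof -
  have "cubeI I \<subseteq> (\<lambda>S i. i \<in> S) ` Pow I"
  proof
    fix x assume "x \<in> cubeI I"
    hence "x = (\<lambda>i. i \<in> {i\<in>I. x i})" by (auto simp: cubeI_def fun_eq_iff)
    thus "x \<in> (\<lambda>S i. i \<in> S) ` Pow I" by blast
  qed
  thus ?thesis using assms by (meson finite_Pow_iff finite_imageI finite_subset)
qed

lemma cubeI_insert: assumes "j \<notin> I"
  shows "cubeI (insert j I) = (\<lambda>(a,x). x(j:=a)) ` (UNIV \<times> cubeI I)"
proof
  show "cubeI (insert j I) \<subseteq> (\<lambda>(a,x). x(j:=a)) ` (UNIV \<times> cubeI I)"
  proof
    fix x assume x: "x \<in> cubeI (insert j I)"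
    have "x = (\<lambda>(a,x). x(j:=a)) (x j, x(j:=False))" by auto
    moreover have "x(j:=False) \<in> cubeI I" using x by (auto simp: cubeI_def)
    ultimately show "x \<in> (\<lambda>(a,x). x(j:=a)) ` (UNIV \<times> cubeI I)" by blast
  qed
  show "(\<lambda>(a,x). x(j:=a)) ` (UNIV \<times> cubeI I) \<subseteq> cubeI (insert j I)"
    by (auto simp: cubeI_def)
qed

lemma inj_upd: assumes "j \<notin> I" shows "inj_on (\<lambda>(a,x). x(j:=a)) (UNIV \<times> cubeI I)"
proof (rule inj_onI, clarsimp)
  fix a x b y assume "x \<in> cubeI I" "y \<in> cubeI I" and e: "x(j := a) = y(j := b)"
  hence "x j = y j" using assms by (auto simp: cubeI_def)
  moreover have "a = b" using fun_cong[OF e, of j] by simp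
  moreover have "\<forall>i. i \<noteq> j \<longrightarrow> x i = y i" using e by (metis fun_upd_other)
  ultimately show "a = b \<and> x = y" by (auto simp: fun_eq_iff)
qed

lemma sum_cubeI_insert: assumes "j \<notin> I"
  shows "(\<Sum>x\<in>cubeI (insert j I). h x) = (\<Sum>a\<in>UNIV. \<Sum>x\<in>cubeI I. h (x(j:=a)))"
proof -
  have "(\<Sum>x\<in>cubeI (insert j I). h x) = (\<Sum>z\<in>UNIV \<times> cubeI I. h ((\<lambda>(a,x). x(j:=a)) z))"
    unfolding cubeI_insert[OF assms] by (rule sum.reindex[OF inj_upd[OF assms], unfolded comp_def])
  also have "\<dots> = (\<Sum>a\<in>UNIV. \<Sum>x\<in>cubeI I. h (x(j:=a)))"
    by (simp add: sum.cartesian_product split_def)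
  finally show ?thesis .
qed

lemma prod_ins: assumes "j \<notin> I" "finite I"
  shows "(\<Prod>i\<in>insert j I. pw t ((x(j:=a)) i) ((y(j:=b)) i)) = pw t a b * (\<Prod>i\<in>I. pw t (x i) (y i))"
proof -
  have "(\<Prod>i\<in>I. pw t ((x(j:=a)) i) ((y(j:=b)) i)) = (\<Prod>i\<in>I. pw t (x i) (y i))"
    using assms by (intro prod.cong) auto
  thus ?thesis using assms by simp
qed

lemma EI_insert: assumes "finite I" "j \<notin> I"
  shows "EI t (insert j I) H = (\<Sum>a\<in>UNIV. \<Sum>b\<in>UNIV. pw t a b * EI t I (\<lambda>x y. H (x(j:=a)) (y(j:=b))))"
proof -
  have "EI t (insert j I) H = (\<Sum>a\<in>UNIV. \<Sum>x\<in>cubeI I. \<Sum>b\<in>UNIV. \<Sum>y\<in>cubeI I.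
      pw t a b * ((\<Prod>i\<in>I. pw t (x i) (y i)) * H (x(j:=a)) (y(j:=b))))"
    unfolding EI_def sum_cubeI_insert[OF assms(2)] prod_ins[OF assms(2,1)]
    by (simp add: mult.assoc)
  also have "\<dots> = (\<Sum>a\<in>UNIV. \<Sum>b\<in>UNIV. \<Sum>x\<in>cubeI I. \<Sum>y\<in>cubeI I.
      pw t a b * ((\<Prod>i\<in>I. pw t (x i) (y i)) * H (x(j:=a)) (y(j:=b))))"
    by (rule sum.cong[OF refl], rule sum.swap)
  also have "\<dots> = (\<Sum>a\<in>UNIV. \<Sum>b\<in>UNIV. pw t a b * EI t I (\<lambda>x y. H (x(j:=a)) (y(j:=b))))"
    by (simp add: EI_def sum_distrib_left)
  finally show ?thesis .
qed

lemma cubeI_empty: "cubeI {} = {\<lambda>_. False}"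
  by (auto simp: cubeI_def)

lemma EI_const: "finite I \<Longrightarrow> EI t I (\<lambda>x y. c) = c"
proof (induction I rule: finite_induct)
  case empty thus ?case by (simp add: EI_def cubeI_empty)
next
  case (insert j I) thus ?case by (simp add: EI_insert UNIV_bool pw_def algebra_simps)
qed

lemma EI_mono: assumes "0 \<le> t" "t \<le> 1" "\<And>x y. H x y \<le> K x y"
  shows "EI t I H \<le> EI t I K"
  unfolding EI_def
  by (intro sum_mono mult_left_mono assms prod_nonneg pw_nonneg)

definition D :: "real \<Rightarrow> (bool \<Rightarrow> bool \<Rightarrow> real) \<Rightarrow> real" where
  "D t f = (1-t)*(f True True - f False False) + t*(f True False - f False True)"

definition mono2 where "mono2 f \<longleftrightarrow> (\<forall>b. f False b \<le> f True b) \<and> (\<forall>a. f a False \<le> f a True)"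
definition anti2 where "anti2 f \<longleftrightarrow> (\<forall>b. f False b \<ge> f True b) \<and> (\<forall>a. f a False \<ge> f a True)"
definition const2 where "const2 (f :: bool \<Rightarrow> bool \<Rightarrow> real) \<longleftrightarrow> (\<forall>a b. f a b = f False False)"

lemma D_mono: assumes "0 \<le> t" "t \<le> 1/2" "mono2 f" shows "D t f \<ge> 0"
proof -
  have e: "D t f = (1-t)*(f True True - f False True) + (1-2*t)*(f False True - f False False)
     + t*(f True False - f False False)" by (simp add: D_def algebra_simps)
  have "(1-t)*(f True True - f False True) \<ge> 0" "(1-2*t)*(f False True - f False False) \<ge> 0"
     "t*(f True False - f False False) \<ge> 0" using assms by (auto simp: mono2_def)
  thus ?thesis using e by linarith
qed

lemma D_anti: assumes "0 \<le> t" "t \<le> 1/2" "anti2 f" shows "D t f \<le> 0"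
proof -
  have e: "D t f = (1-t)*(f True True - f False True) + (1-2*t)*(f False True - f False False)
     + t*(f True False - f False False)" by (simp add: D_def algebra_simps)
  have "(1-t)*(f False True - f True True) \<ge> 0" "(1-2*t)*(f False False - f False True) \<ge> 0"
     "t*(f False False - f True False) \<ge> 0" using assms by (auto simp: anti2_def)
  thus ?thesis using e by (simp add: algebra_simps)
qed

lemma one_coord: fixes f g :: "bool \<Rightarrow> bool \<Rightarrow> real"
  assumes "0 \<le> t" "t \<le> 1/2"
    and h: "(mono2 f \<and> mono2 g) \<or> (anti2 f \<and> anti2 g) \<or> const2 f \<or> const2 g"
  shows "(\<Sum>a\<in>UNIV. \<Sum>b\<in>UNIV. pw t a b * f a b) * (\<Sum>a\<in>UNIV. \<Sum>b\<in>UNIV. pw t a b * g a b)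
     \<le> (\<Sum>a\<in>UNIV. \<Sum>b\<in>UNIV. pw t a b * (f a b * g a b))"
proof -
  let ?c1 = "(f False True - f False False) * (g False True - g False False)"
  let ?c2 = "(f True True - f True False) * (g True True - g True False)"
  have id: "(\<Sum>a\<in>UNIV. \<Sum>b\<in>UNIV. pw t a b * (f a b * g a b))
     - (\<Sum>a\<in>UNIV. \<Sum>b\<in>UNIV. pw t a b * f a b) * (\<Sum>a\<in>UNIV. \<Sum>b\<in>UNIV. pw t a b * g a b)
     = 1/2 * (t*(1-t)) * (?c1 + ?c2) + 1/4 * (D t f * D t g)"
    by (simp add: UNIV_bool pw_def D_def field_simps)
  have c: "?c1 \<ge> 0 \<and> ?c2 \<ge> 0 \<and> D t f * D t g \<ge> 0"
    using h
  proof (elim disjE conjE)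
    assume "mono2 f" "mono2 g"
    thus ?thesis using D_mono[OF assms(1,2)] by (auto simp: mono2_def)
  next
    assume "anti2 f" "anti2 g"
    thus ?thesis using D_anti[OF assms(1,2)] by (auto simp: anti2_def intro!: mult_nonpos_nonpos)
  next
    assume "const2 f" thus ?thesis unfolding const2_def D_def by (metis diff_self mult_zero_left mult_zero_right add_0 order_refl)
  next
    assume "const2 g" thus ?thesis unfolding const2_def D_def by (metis diff_self mult_zero_left mult_zero_right add_0 order_refl)
  qed
  have "t*(1-t) \<ge> 0" using assms by simp
  hence "1/2 * (t*(1-t)) * (?c1 + ?c2) \<ge> 0" using c by simp
  thus ?thesis using id c by linarith
qed


definition MS :: "nat set \<Rightarrow> ((nat \<Rightarrow> bool) \<Rightarrow> (nat \<Rightarrow> bool) \<Rightarrow> real) \<Rightarrow> bool" where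
  "MS S F \<longleftrightarrow> (\<forall>x y. \<forall>i\<in>S. F (x(i:=False)) y \<le> F (x(i:=True)) y \<and> F x (y(i:=False)) \<le> F x (y(i:=True)))"
definition MT :: "nat set \<Rightarrow> ((nat \<Rightarrow> bool) \<Rightarrow> (nat \<Rightarrow> bool) \<Rightarrow> real) \<Rightarrow> bool" where
  "MT T F \<longleftrightarrow> (\<forall>x y. \<forall>i\<in>T. F (x(i:=False)) y \<ge> F (x(i:=True)) y \<and> F x (y(i:=False)) \<ge> F x (y(i:=True)))"
definition IND :: "nat set \<Rightarrow> ((nat \<Rightarrow> bool) \<Rightarrow> (nat \<Rightarrow> bool) \<Rightarrow> real) \<Rightarrow> bool" where
  "IND C F \<longleftrightarrow> (\<forall>x y i a b. i \<notin> C \<longrightarrow> F (x(i:=a)) (y(i:=b)) = F x y)"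
definition cnd :: "nat \<Rightarrow> bool \<Rightarrow> bool \<Rightarrow> ((nat \<Rightarrow> bool) \<Rightarrow> (nat \<Rightarrow> bool) \<Rightarrow> real) \<Rightarrow> ((nat \<Rightarrow> bool) \<Rightarrow> (nat \<Rightarrow> bool) \<Rightarrow> real)" where
  "cnd j a b F = (\<lambda>x y. F (x(j:=a)) (y(j:=b)))"

lemma MS_cnd: assumes "MS S F" shows "MS S (cnd j a b F)"
  unfolding MS_def cnd_def
proof (intro allI ballI)
  fix x y i assume i: "i \<in> S"
  show "F (x(i := False, j := a)) (y(j := b)) \<le> F (x(i := True, j := a)) (y(j := b)) \<and>
        F (x(j := a)) (y(i := False, j := b)) \<le> F (x(j := a)) (y(i := True, j := b))"
  proof (cases "i = j")
    case True thus ?thesis by simp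
  next
    case False
    hence "x(i := False, j := a) = x(j:=a, i := False)" "x(i := True, j := a) = x(j:=a, i := True)"
      "y(i := False, j := b) = y(j:=b, i := False)" "y(i := True, j := b) = y(j:=b, i := True)"
      by (auto simp: fun_upd_twist)
    thus ?thesis using assms i unfolding MS_def by simp
  qed
qed

lemma MT_cnd: assumes "MT S F" shows "MT S (cnd j a b F)"
  unfolding MT_def cnd_def
proof (intro allI ballI)
  fix x y i assume i: "i \<in> S"
  show "F (x(i := False, j := a)) (y(j := b)) \<ge> F (x(i := True, j := a)) (y(j := b)) \<and>
        F (x(j := a)) (y(i := False, j := b)) \<ge> F (x(j := a)) (y(i := True, j := b))"
  proof (cases "i = j")
    case True thus ?thesis by simp
  next
    case False
    hence "x(i := False, j := a) = x(j:=a, i := False)" "x(i := True, j := a) = x(j:=a, i := True)"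
      "y(i := False, j := b) = y(j:=b, i := False)" "y(i := True, j := b) = y(j:=b, i := True)"
      by (auto simp: fun_upd_twist)
    thus ?thesis using assms i unfolding MT_def by simp
  qed
qed

lemma IND_cnd: assumes "IND C F" shows "IND C (cnd j a b F)"
  unfolding IND_def cnd_def
proof (intro allI impI)
  fix x y i c d assume i: "i \<notin> C"
  show "F (x(i := c, j := a)) (y(i := d, j := b)) = F (x(j := a)) (y(j := b))"
  proof (cases "i = j")
    case True thus ?thesis by simp
  next
    case False
    hence "x(i := c, j := a) = x(j:=a, i := c)" "y(i := d, j := b) = y(j:=b, i := d)"
      by (auto simp: fun_upd_twist)
    thus ?thesis using assms i unfolding IND_def by simp
  qed
qed

lemma cnd_const: "IND C F \<Longrightarrow> j \<notin> C \<Longrightarrow> cnd j a b F = F"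
  unfolding IND_def cnd_def by (auto simp: fun_eq_iff)

lemma harris:
  assumes "finite I" "0 \<le> t" "t \<le> 1/2" "A \<inter> B = {}"
    and "MS S F" "MT T F" "MS S G" "MT T G" "IND (A \<union> S \<union> T) F" "IND (B \<union> S \<union> T) G"
  shows "EI t I F * EI t I G \<le> EI t I (\<lambda>x y. F x y * G x y)"
  using assms
proof (induction I arbitrary: F G rule: finite_induct)
  case empty thus ?case by (simp add: EI_def cubeI_empty)
next
  case (insert j I F G)
  have t1: "t \<le> 1" using insert by simp
  define f where "f a b = EI t I (cnd j a b F)" for a b
  define g where "g a b = EI t I (cnd j a b G)" for a b
  have IH: "f a b * g a b \<le> EI t I (\<lambda>x y. cnd j a b F x y * cnd j a b G x y)" for a b
    unfolding f_def g_def using insert by (intro insert.IH MS_cnd MT_cnd IND_cnd) auto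
  have "EI t (insert j I) F * EI t (insert j I) G =
     (\<Sum>a\<in>UNIV. \<Sum>b\<in>UNIV. pw t a b * f a b) * (\<Sum>a\<in>UNIV. \<Sum>b\<in>UNIV. pw t a b * g a b)"
    unfolding f_def g_def cnd_def using insert by (simp add: EI_insert)
  also have "\<dots> \<le> (\<Sum>a\<in>UNIV. \<Sum>b\<in>UNIV. pw t a b * (f a b * g a b))"
  proof (rule one_coord)
    show "0 \<le> t" "t \<le> 1/2" using insert by auto
    have monoS: "mono2 (\<lambda>a b. EI t I (cnd j a b H))" if "MS S H" "j \<in> S" for H
      unfolding mono2_def cnd_def using that insert t1
      by (auto intro!: EI_mono simp: MS_def)
    have antiT: "anti2 (\<lambda>a b. EI t I (cnd j a b H))" if "MT T H" "j \<in> T" for H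
      unfolding anti2_def cnd_def using that insert t1
      by (auto intro!: EI_mono simp: MT_def)
    show "(mono2 f \<and> mono2 g) \<or> (anti2 f \<and> anti2 g) \<or> const2 f \<or> const2 g"
    proof (cases "j \<in> S")
      case True thus ?thesis using monoS insert unfolding f_def g_def by blast
    next
      case nS: False
      show ?thesis
      proof (cases "j \<in> T")
        case True thus ?thesis using antiT insert unfolding f_def g_def by blast
      next
        case nT: False
        show ?thesis
        proof (cases "j \<in> A")
          case True
          hence "j \<notin> B \<union> S \<union> T" using nS nT insert by auto
          hence "const2 g" unfolding g_def const2_def using cnd_const insert by metis
          thus ?thesis by blast
        next
          case False
          hence "j \<notin> A \<union> S \<union> T" using nS nT by auto
          hence "const2 f" unfolding f_def const2_def using cnd_const insert by metis
          thus ?thesis by blast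
        qed
      qed
    qed
  qed
  also have "\<dots> \<le> (\<Sum>a\<in>UNIV. \<Sum>b\<in>UNIV. pw t a b * EI t I (\<lambda>x y. cnd j a b F x y * cnd j a b G x y))"
    using IH t1 insert by (intro sum_mono mult_left_mono pw_nonneg) auto
  also have "\<dots> = EI t (insert j I) (\<lambda>x y. F x y * G x y)"
    unfolding cnd_def using insert by (simp add: EI_insert)
  finally show ?case .
qed


lemma joint_pw: "joint_pmf n t x y = (\<Prod>i\<in>{1..n}. pw t (x i) (y i))"
proof -
  have "pw t a b = 1/2 * (if a = b then 1 - t else t)" for a b by (simp add: pw_def)
  hence "(\<Prod>i\<in>{1..n}. pw t (x i) (y i)) = (\<Prod>i\<in>{1..n}. 1/2 * (if x i = y i then 1 - t else t))"
    by (intro prod.cong) (auto simp: pw_def)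
  also have "\<dots> = (1/2)^n * (\<Prod>i\<in>{1..n}. (if x i = y i then 1 - t else t))"
    unfolding prod.distrib by simp
  finally show ?thesis by (simp add: joint_pmf_def)
qed

lemma expect_EI: "expect n t H = EI t {1..n} H"
proof -
  have "cube n = cubeI {1..n}" by (simp add: cube_def cubeI_def)
  thus ?thesis by (simp add: expect_def EI_def joint_pw)
qed

lemma pmf_nonneg: "0 \<le> t \<Longrightarrow> t \<le> 1 \<Longrightarrow> joint_pmf n t x y \<ge> 0"
  by (simp add: joint_pw prod_nonneg pw_nonneg)

lemma pmf_pos_imp: assumes "0 \<le> t" "joint_pmf n t x y > 0" "\<not> t > 0"
  shows "\<forall>i\<in>{1..n}. x i = y i"
proof (rule ccontr)
  assume "\<not> (\<forall>i\<in>{1..n}. x i = y i)"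
  then obtain i where "i \<in> {1..n}" "x i \<noteq> y i" by blast
  hence "joint_pmf n t x y = 0" using assms by (auto simp: joint_pw pw_def intro!: bexI[of _ i])
  thus False using assms by simp
qed

lemma pmf_pos: assumes "0 \<le> t" "t \<le> 1/2" "t > 0 \<or> (\<forall>i\<in>{1..n}. x i = y i)"
  shows "joint_pmf n t x y > 0"
  unfolding joint_pw using assms by (auto intro!: prod_pos simp: pw_def)

lemma expect_cong: assumes "0 \<le> t" "t \<le> 1"
  "\<And>x y. x \<in> cube n \<Longrightarrow> y \<in> cube n \<Longrightarrow> joint_pmf n t x y > 0 \<Longrightarrow> H x y = K x y"
  shows "expect n t H = expect n t K"
  unfolding expect_def
proof (intro sum.cong refl)
  fix x y assume "x \<in> cube n" "y \<in> cube n"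
  thus "joint_pmf n t x y * H x y = joint_pmf n t x y * K x y"
    using assms pmf_nonneg[OF assms(1,2), of n x y] by (cases "joint_pmf n t x y > 0") auto
qed

definition prj :: "nat set \<Rightarrow> (nat \<Rightarrow> bool) \<Rightarrow> (nat \<Rightarrow> bool)" where
  "prj C x = (\<lambda>i. i \<in> C \<and> x i)"

lemma prj_cube: "C \<subseteq> {1..n} \<Longrightarrow> prj C x \<in> cube n"
  by (auto simp: prj_def cube_def)

lemma prj_upd_in: "i \<in> C \<Longrightarrow> prj C (x(i:=a)) = (prj C x)(i:=a)"
  by (auto simp: prj_def fun_eq_iff)
lemma prj_upd_out: "i \<notin> C \<Longrightarrow> prj C (x(i:=a)) = prj C x"
  by (auto simp: prj_def fun_eq_iff)

lemma reduce:
  assumes t: "0 \<le> t" "t \<le> 1/2" and C: "C \<subseteq> {1..n}" "S \<subseteq> C" "T \<subseteq> C"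
    and meas: "depends_on n t C F"
    and mon: "S_increasing n S F" "T_decreasing n T F"
  defines "F' \<equiv> (\<lambda>x y. F (prj C x) (prj C y))"
  shows "MS S F'" "MT T F'" "IND C F'"
    "\<And>x y. x \<in> cube n \<Longrightarrow> y \<in> cube n \<Longrightarrow> joint_pmf n t x y > 0 \<Longrightarrow> F x y = F' x y"
proof -
  show "MS S F'" unfolding MS_def F'_def
  proof (intro allI ballI)
    fix x y i assume i: "i \<in> S"
    hence iC: "i \<in> C" using C by auto
    show "F (prj C (x(i := False))) (prj C y) \<le> F (prj C (x(i := True))) (prj C y) \<and>
          F (prj C x) (prj C (y(i := False))) \<le> F (prj C x) (prj C (y(i := True)))"
      unfolding prj_upd_in[OF iC] using mon(1) i prj_cube[OF C(1)] unfolding S_increasing_def by blast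
  qed
  show "MT T F'" unfolding MT_def F'_def
  proof (intro allI ballI)
    fix x y i assume i: "i \<in> T"
    hence iC: "i \<in> C" using C by auto
    show "F (prj C (x(i := False))) (prj C y) \<ge> F (prj C (x(i := True))) (prj C y) \<and>
          F (prj C x) (prj C (y(i := False))) \<ge> F (prj C x) (prj C (y(i := True)))"
      unfolding prj_upd_in[OF iC] using mon(2) i prj_cube[OF C(1)] unfolding T_decreasing_def by blast
  qed
  show "IND C F'" unfolding IND_def F'_def by (simp add: prj_upd_out)
  fix x y assume x: "x \<in> cube n" and y: "y \<in> cube n" and p: "joint_pmf n t x y > 0"
  have "joint_pmf n t (prj C x) (prj C y) > 0"
  proof (rule pmf_pos[OF t])
    show "t > 0 \<or> (\<forall>i\<in>{1..n}. prj C x i = prj C y i)"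
      using pmf_pos_imp[OF t(1) p] by (auto simp: prj_def)
  qed
  moreover have "\<forall>i\<in>C. x i = prj C x i \<and> y i = prj C y i" by (simp add: prj_def)
  ultimately show "F x y = F' x y" unfolding F'_def
    using meas x y p prj_cube[OF C(1)] unfolding depends_on_def by blast
qed

theorem proposition3:
  fixes n :: nat and t :: real and A B S T :: "nat set"
    and F G :: "(nat \<Rightarrow> bool) \<Rightarrow> (nat \<Rightarrow> bool) \<Rightarrow> real"
  assumes t: "0 \<le> t" "t \<le> 1/2"
    and sub: "A \<subseteq> {1..n}" "B \<subseteq> {1..n}" "S \<subseteq> {1..n}" "T \<subseteq> {1..n}"
    and disj: "A \<inter> B = {}" "A \<inter> S = {}" "A \<inter> T = {}"
              "B \<inter> S = {}" "B \<inter> T = {}" "S \<inter> T = {}"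
    and measF: "depends_on n t (A \<union> S \<union> T) F"
    and measG: "depends_on n t (B \<union> S \<union> T) G"
    and monF: "S_increasing n S F" "T_decreasing n T F"
    and monG: "S_increasing n S G" "T_decreasing n T G"
  shows "expect n t (\<lambda>x y. F x y * G x y) \<ge> expect n t F * expect n t G"
proof -
  define F' where "F' = (\<lambda>x y. F (prj (A \<union> S \<union> T) x) (prj (A \<union> S \<union> T) y))"
  define G' where "G' = (\<lambda>x y. G (prj (B \<union> S \<union> T) x) (prj (B \<union> S \<union> T) y))"
  have t1: "t \<le> 1" using t by simp
  have CF: "A \<union> S \<union> T \<subseteq> {1..n}" "S \<subseteq> A \<union> S \<union> T" "T \<subseteq> A \<union> S \<union> T" using sub by auto
  have CG: "B \<union> S \<union> T \<subseteq> {1..n}" "S \<subseteq> B \<union> S \<union> T" "T \<subseteq> B \<union> S \<union> T" using sub by auto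
  note rF = reduce[OF t CF measF monF, folded F'_def]
  note rG = reduce[OF t CG measG monG, folded G'_def]
  have "expect n t F = expect n t F'" using rF(4) by (intro expect_cong[OF t(1) t1]) (auto simp: F'_def)
  moreover have "expect n t G = expect n t G'" using rG(4) by (intro expect_cong[OF t(1) t1]) (auto simp: G'_def)
  moreover have "expect n t (\<lambda>x y. F x y * G x y) = expect n t (\<lambda>x y. F' x y * G' x y)"
    by (rule expect_cong[OF t(1) t1]) (simp add: rF(4) rG(4) F'_def G'_def)
  moreover have "EI t {1..n} F' * EI t {1..n} G' \<le> EI t {1..n} (\<lambda>x y. F' x y * G' x y)"
    by (rule harris[OF _ t disj(1) rF(1,2) rG(1,2) rF(3) rG(3)]) simp
  ultimately show ?thesis by (simp add: expect_EI)
qed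

end
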